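(* Let $n\ge1$ and $d\ge2$ be integers, $\zeta$ a primitive $d$-th root of unity and $\zeta_*$ a primitive $12d$-th root of unity with $\zeta_*^{12}=\zeta$. For every $f\in\Psi^{\#}(Y,\pi)$, \[ \zeta_*^{nd(1-d^2)}\prod_{y\in Y}\zeta_*^{-6(f(y)^2+df(y))}=\zeta^{\sum_{i=1}^n\left(k_{i-1}(f)-f(i)\right)\left(\sum_{j=1}^{i}f(j)-\sum_{j=1}^{i-1}k_{j-1}(f)\right)}. \]
   Context: $Y=\{1,2,\dots,nd+1\}$ and $\pi\colon Y\to\mathbb{N}$ is given by $\pi(k)=n$ for $1\le k\le n+1$ and $\pi(k)=\lfloor\frac{k-n-2}{d-1}\rfloor$ for $n+2\le k\le nd+1$ (so $\pi^{-1}(n)=\{1,\dots,n+1\}$ and $\pi^{-1}(i)$ has $d-1$ elements for $0\le i\le n-1$). $\Psi(Y,\pi)$ is the set of maps $f\colon Y\to\{0,1,\dots,d-1\}$ that are strictly increasing on each $\pi^{-1}(i)$, $0\le i\le n$. For $f\in\Psi(Y,\pi)$ and $0\le i\le n-1$, $k_i(f)$ is the unique element of $\{0,\dots,d-1\}\setminus f(\pi^{-1}(i))$. $\Psi^{\#}(Y,\pi)=\{f\in\Psi(Y,\pi):\sum_{y\in Y}f(y)\equiv n\binom{d}{2}\pmod d\}$. *)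

theory Defs
  imports Complex_Main
begin

definition primitive_root_of_unity :: "nat \<Rightarrow> complex \<Rightarrow> bool" where
  "primitive_root_of_unity m z \<longleftrightarrow> z ^ m = 1 \<and> (\<forall>k. 0 < k \<and> k < m \<longrightarrow> z ^ k \<noteq> 1)"

definition Yset :: "nat \<Rightarrow> nat \<Rightarrow> nat set" where
  "Yset n d = {1..n*d+1}"

definition piY :: "nat \<Rightarrow> nat \<Rightarrow> nat \<Rightarrow> nat" where
  "piY n d k = (if k \<le> n + 1 then n else (k - n - 2) div (d - 1))"

definition fiber :: "nat \<Rightarrow> nat \<Rightarrow> nat \<Rightarrow> nat set" where
  "fiber n d i = {y \<in> Yset n d. piY n d y = i}"

definition Psi :: "nat \<Rightarrow> nat \<Rightarrow> (nat \<Rightarrow> nat) set" where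
  "Psi n d = {f. (\<forall>y \<in> Yset n d. f y < d) \<and> (\<forall>i \<le> n. strict_mono_on (fiber n d i) f)}"

definition kf :: "nat \<Rightarrow> nat \<Rightarrow> (nat \<Rightarrow> nat) \<Rightarrow> nat \<Rightarrow> nat" where
  "kf n d f i = (THE k. k \<in> {0..<d} - f ` fiber n d i)"

definition Psi_sharp :: "nat \<Rightarrow> nat \<Rightarrow> (nat \<Rightarrow> nat) set" where
  "Psi_sharp n d = {f \<in> Psi n d. (\<Sum>y \<in> Yset n d. f y) mod d = (n * (d choose 2)) mod d}"

end

theory Submission imports Defs begin

lemma powi_sum:
  fixes x :: complex
  assumes "x \<noteq> 0" "finite A"
  shows "(\<Prod>y\<in>A. x powi e y) = x powi (\<Sum>y\<in>A. e y)"
  using assms(2) by (induction A rule: finite_induct) (auto simp: power_int_add assms(1))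

lemma telescope:
  fixes a b :: "nat \<Rightarrow> int"
  shows "2 * (\<Sum>i = 1..n. (b i - a i) * ((\<Sum>j = 1..i. a j) - (\<Sum>j = 1..i - 1. b j)))
     = - (((\<Sum>j = 1..n. a j) - (\<Sum>j = 1..n. b j))^2) + (\<Sum>j = 1..n. (b j)^2) - (\<Sum>j = 1..n. (a j)^2)"
proof (induction n)
  case 0 then show ?case by simp
next
  case (Suc m)
  let ?R = "\<lambda>n. (\<Sum>i = 1..n. (b i - a i) * ((\<Sum>j = 1..i. a j) - (\<Sum>j = 1..i - 1. b j)))"
  have "?R (Suc m) = ?R m + (b (Suc m) - a (Suc m)) * ((\<Sum>j = 1..m. a j) + a (Suc m) - (\<Sum>j = 1..m. b j))"
    by simp
  then have "2 * ?R (Suc m) = 2 * ?R m + 2 * (b (Suc m) - a (Suc m)) * ((\<Sum>j = 1..m. a j) + a (Suc m) - (\<Sum>j = 1..m. b j))"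
    by simp
  also have "\<dots> = - (((\<Sum>j = 1..m. a j) - (\<Sum>j = 1..m. b j))^2) + (\<Sum>j = 1..m. (b j)^2) - (\<Sum>j = 1..m. (a j)^2) + 2 * (b (Suc m) - a (Suc m)) * ((\<Sum>j = 1..m. a j) + a (Suc m) - (\<Sum>j = 1..m. b j))"
    using Suc.IH by simp
  finally show ?case by (simp add: algebra_simps power2_eq_square)
qed

lemma sq6: "6 * (\<Sum>x<d. int x ^ 2) = int d * (int d - 1) * (2 * int d - 1)"
  by (induction d) (auto simp: algebra_simps power2_eq_square)
lemma s2: "2 * (\<Sum>x<d. int x) = int d * (int d - 1)"
  by (induction d) (auto simp: algebra_simps)

lemma div_range:
  fixes x m i :: nat assumes "m > 0"
  shows "x div m = i \<longleftrightarrow> i * m \<le> x \<and> x < i * m + m"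
proof
  assume "x div m = i"
  moreover have "x = (x div m) * m + x mod m" by simp
  moreover have "x mod m < m" using assms by simp
  ultimately show "i * m \<le> x \<and> x < i * m + m" by (metis add_less_cancel_left le_add1)
next
  assume "i * m \<le> x \<and> x < i * m + m"
  then show "x div m = i" using div_nat_eqI[of m i x] by (simp add: mult.commute)
qed

lemma fiber_eq:
  assumes "d \<ge> 2" "i < n"
  shows "fiber n d i = {n + 2 + i * (d - 1) ..< n + 2 + i * (d - 1) + (d - 1)}"
proof -
  have m: "d - 1 > 0" using assms by simp
  have b: "i * (d - 1) + (d - 1) \<le> n * (d - 1)"
    using assms(2) by (metis Suc_leI add.commute mult_Suc mult_le_mono1)
  have nd: "n * (d - 1) + n = n * d" using assms(1)
    by (metis add.commute le_add_diff_inverse2 mult.commute mult_Suc one_le_numeral order_trans plus_1_eq_Suc)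
  show ?thesis
  proof (intro set_eqI iffI)
    fix y assume "y \<in> fiber n d i"
    then have y: "1 \<le> y" "y \<le> n * d + 1" "piY n d y = i"
      unfolding fiber_def Yset_def by auto
    have "\<not> y \<le> n + 1" using y(3) assms(2) unfolding piY_def by auto
    then have "(y - n - 2) div (d - 1) = i" using y(3) unfolding piY_def by simp
    then have "i * (d - 1) \<le> y - n - 2 \<and> y - n - 2 < i * (d - 1) + (d - 1)"
      using div_range[OF m] by blast
    with \<open>\<not> y \<le> n + 1\<close> show "y \<in> {n + 2 + i * (d - 1) ..< n + 2 + i * (d - 1) + (d - 1)}"
      by auto
  next
    fix y assume "y \<in> {n + 2 + i * (d - 1) ..< n + 2 + i * (d - 1) + (d - 1)}"
    then have y: "n + 2 + i * (d - 1) \<le> y" "y < n + 2 + i * (d - 1) + (d - 1)" by auto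
    have "i * (d - 1) \<le> y - n - 2 \<and> y - n - 2 < i * (d - 1) + (d - 1)" using y by auto
    then have "(y - n - 2) div (d - 1) = i" using div_range[OF m] by blast
    moreover have "y \<le> n * d + 1" using y b nd by linarith
    ultimately show "y \<in> fiber n d i" using y unfolding fiber_def Yset_def piY_def by auto
  qed
qed

lemma card_fiber: "d \<ge> 2 \<Longrightarrow> i < n \<Longrightarrow> card (fiber n d i) = d - 1"
  by (simp add: fiber_eq)

lemma kf_prop:
  assumes "f \<in> Psi n d" "d \<ge> 2" "i < n"
  shows "kf n d f i < d \<and> f ` fiber n d i = {..<d} - {kf n d f i}"
proof -
  have inj: "inj_on f (fiber n d i)"
    using assms unfolding Psi_def by (auto intro: strict_mono_on_imp_inj_on)
  have sub: "f ` fiber n d i \<subseteq> {..<d}"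
    using assms(1) unfolding Psi_def fiber_def by auto
  have ci: "card (f ` fiber n d i) = d - 1"
    using card_image[OF inj] card_fiber[OF assms(2,3)] by simp
  have "card ({..<d} - f ` fiber n d i) = 1"
    using card_Diff_subset[OF _ sub] ci assms(2) by (simp add: finite_subset[OF sub])
  then obtain k where k: "{..<d} - f ` fiber n d i = {k}" by (meson card_1_singletonE)
  have "kf n d f i = k" unfolding kf_def using k by (simp add: atLeast0LessThan)
  moreover have "k < d" using k by auto
  moreover have "f ` fiber n d i = {..<d} - {k}" using k sub by auto
  ultimately show ?thesis by simp
qed

lemma sum_fiber:
  fixes g :: "nat \<Rightarrow> int"
  assumes "f \<in> Psi n d" "d \<ge> 2" "i < n"
  shows "(\<Sum>y\<in>fiber n d i. g (f y)) = (\<Sum>x<d. g x) - g (kf n d f i)"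
proof -
  have inj: "inj_on f (fiber n d i)"
    using assms unfolding Psi_def by (auto intro: strict_mono_on_imp_inj_on)
  have "(\<Sum>y\<in>fiber n d i. g (f y)) = (\<Sum>x\<in>f ` fiber n d i. g x)"
    by (simp add: sum.reindex[OF inj])
  also have "\<dots> = (\<Sum>x\<in>{..<d} - {kf n d f i}. g x)" using kf_prop[OF assms] by simp
  also have "\<dots> = (\<Sum>x<d. g x) - g (kf n d f i)" using kf_prop[OF assms] by (simp add: sum_diff1)
  finally show ?thesis .
qed

lemma sum_Y:
  fixes g :: "nat \<Rightarrow> int"
  assumes "f \<in> Psi n d" "d \<ge> 2"
  shows "(\<Sum>y\<in>Yset n d. g (f y)) = (\<Sum>j=1..n+1. g (f j)) + (\<Sum>i<n. (\<Sum>x<d. g x) - g (kf n d f i))"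
proof -
  have nd: "n \<le> n * d" using assms(2) by simp
  have Y: "Yset n d = {1..n+1} \<union> {n+2..n*d+1}" unfolding Yset_def apply auto using nd by linarith
  have "(\<Sum>y\<in>Yset n d. g (f y)) = (\<Sum>j=1..n+1. g (f j)) + (\<Sum>y\<in>{n+2..n*d+1}. g (f y))"
    unfolding Y by (subst sum.union_disjoint) auto
  moreover have "(\<Sum>y\<in>{n+2..n*d+1}. g (f y)) = (\<Sum>i<n. (\<Sum>y\<in>fiber n d i. g (f y)))"
  proof -
    have img: "piY n d ` {n+2..n*d+1} \<subseteq> {..<n}"
    proof
      fix i assume "i \<in> piY n d ` {n+2..n*d+1}"
      then obtain y where y: "n+2 \<le> y" "y \<le> n*d+1" "i = piY n d y" by auto
      have m: "d - 1 > 0" using assms by simp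
      have nd2: "n * (d - 1) + n = n * d" using assms(2)
        by (metis add.commute le_add_diff_inverse2 mult.commute mult_Suc one_le_numeral order_trans plus_1_eq_Suc)
      have "y - n - 2 < n * (d - 1)" using y nd2 by linarith
      then have "(y - n - 2) div (d - 1) < n" by (simp add: less_mult_imp_div_less)
      then show "i \<in> {..<n}" using y unfolding piY_def by auto
    qed
    have "(\<Sum>i<n. (\<Sum>y\<in>{x. x \<in> {n+2..n*d+1} \<and> piY n d x = i}. g (f y))) = (\<Sum>y\<in>{n+2..n*d+1}. g (f y))"
      by (rule sum.group[OF _ _ img]) auto
    moreover have "{x. x \<in> {n+2..n*d+1} \<and> piY n d x = i} = fiber n d i" if "i < n" for i
      using that unfolding fiber_def Yset_def piY_def by auto
    ultimately show ?thesis by simp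
  qed
  moreover have "(\<Sum>i<n. (\<Sum>y\<in>fiber n d i. g (f y))) = (\<Sum>i<n. (\<Sum>x<d. g x) - g (kf n d f i))"
    using sum_fiber[OF assms] by simp
  ultimately show ?thesis by simp
qed

lemma key:
  fixes R SA SB SA2 SB2 P1 P2 x t n d :: int
  assumes "2*R = -((SA-SB)^2) + SB2 - SA2" "6*P2 = d*(d-1)*(2*d-1)" "2*P1 = d*(d-1)" "SA + x - SB = d*t"
  shows "n*d*(1-d^2) + ((-6*(SA2 + x^2) - 6*d*(SA+x)) + (n*(-6*P2 - 6*d*P1) + 6*SB2 + 6*d*SB)) - 12*R
     = 6*d*(d*(t^2-t) - n*d*(d-1) - 2*t*x)"
proof -
  have SA: "SA = d*t + SB - x" using assms(4) by simp
  have "12*R = 6*(2*R)" by simp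
  also have "\<dots> = 6*(-((d*t - x)^2) + SB2 - SA2)" using assms(1) SA by simp
  finally have R: "12*R = 6*(-((d*t - x)^2) + SB2 - SA2)" .
  have P: "n*(-6*P2 - 6*d*P1) = -n*(d*(d-1)*(2*d-1)) - 3*n*d*(d*(d-1))"
  proof -
    have "n*(-6*P2 - 6*d*P1) = -n*(6*P2) - 3*n*d*(2*P1)" by (simp add: algebra_simps)
    then show ?thesis using assms(2,3) by simp
  qed
  show ?thesis unfolding R P SA by (simp add: algebra_simps power2_eq_square power3_eq_cube)
qed

lemma sum_lin:
  fixes h :: "'a \<Rightarrow> int"
  shows "(\<Sum>j\<in>A. -6*(h j ^2 + c*h j)) = -6*(\<Sum>j\<in>A. h j^2) - 6*c*(\<Sum>j\<in>A. h j)"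
  by (induction A rule: infinite_finite_induct) (auto simp: algebra_simps)

lemma sum_lin2:
  fixes h :: "nat \<Rightarrow> int"
  shows "(\<Sum>i<n. C - (-6 * h i)) = int n * C + 6*(\<Sum>i<n. h i)"
  by (induction n) (auto simp: algebra_simps)

lemma shift_sum: "(\<Sum>i<n. h i) = (\<Sum>i=1..n. h (i - 1 :: nat))"
  by (induction n) auto

lemma choose2_int: "2 * int (d choose 2) = int d * (int d - 1)"
proof -
  have ev: "even (d * (d - 1))" by auto
  have "2 * (d choose 2) = d * (d - 1)" using ev by (simp add: choose_two)
  then have "int (2 * (d choose 2)) = int (d * (d - 1))" by simp
  then show ?thesis by (cases d) (auto simp: of_nat_mult algebra_simps)
qed

theorem mainTheorem12:
  fixes n d :: nat and \<zeta> \<zeta>s :: complex and f :: "nat \<Rightarrow> nat"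
  assumes "n \<ge> 1" and "d \<ge> 2"
    and "primitive_root_of_unity d \<zeta>"
    and "primitive_root_of_unity (12 * d) \<zeta>s"
    and "\<zeta>s ^ 12 = \<zeta>"
    and "f \<in> Psi_sharp n d"
  shows "\<zeta>s powi (int (n * d) * (1 - int d ^ 2)) *
           (\<Prod>y \<in> Yset n d. \<zeta>s powi (- 6 * (int (f y) ^ 2 + int d * int (f y))))
         = \<zeta> powi (\<Sum>i = 1..n. (int (kf n d f (i - 1)) - int (f i)) *
                        ((\<Sum>j = 1..i. int (f j)) - (\<Sum>j = 1..i - 1. int (kf n d f (j - 1)))))"
proof -
  have fP: "f \<in> Psi n d" using assms(6) unfolding Psi_sharp_def by simp
  have zs1: "\<zeta>s ^ (12 * d) = 1" using assms(4) unfolding primitive_root_of_unity_def by simp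
  then have zs0: "\<zeta>s \<noteq> 0" using assms(2) by (metis power_0_left mult_is_0 zero_neq_numeral zero_neq_one not_numeral_le_zero)
  define a where "a j = int (f j)" for j
  define b where "b i = int (kf n d f (i - 1))" for i
  define R where "R = (\<Sum>i = 1..n. (b i - a i) * ((\<Sum>j = 1..i. a j) - (\<Sum>j = 1..i - 1. b j)))"
  define SA where "SA = (\<Sum>j = 1..n. a j)"
  define SB where "SB = (\<Sum>j = 1..n. b j)"
  define SA2 where "SA2 = (\<Sum>j = 1..n. (a j)^2)"
  define SB2 where "SB2 = (\<Sum>j = 1..n. (b j)^2)"
  define P1 where "P1 = (\<Sum>x<d. int x)"
  define P2 where "P2 = (\<Sum>x<d. int x ^ 2)"
  define x where "x = a (n+1)"
  have R2: "2*R = -((SA-SB)^2) + SB2 - SA2"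
    unfolding R_def SA_def SB_def SA2_def SB2_def by (rule telescope)
  have eP2: "6*P2 = int d*(int d-1)*(2*int d-1)" unfolding P2_def by (rule sq6)
  have eP1: "2*P1 = int d*(int d-1)" unfolding P1_def by (rule s2)
  have kfb: "(\<Sum>i<n. h (kf n d f i)) = (\<Sum>i=1..n. h' (b i))" if "\<And>y. h' (int y) = h y" for h :: "nat \<Rightarrow> int" and h'
    unfolding b_def that by (rule shift_sum)
  have "int (\<Sum>y\<in>Yset n d. f y) = (\<Sum>y\<in>Yset n d. int (f y))" by simp
  also have "\<dots> = (\<Sum>j=1..n+1. int (f j)) + (\<Sum>i<n. P1 - int (kf n d f i))"
    unfolding P1_def by (rule sum_Y[OF fP assms(2)])
  also have "\<dots> = SA + x + int n * P1 - SB"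
  proof -
    have "(\<Sum>i<n. P1 - int (kf n d f i)) = int n * P1 - (\<Sum>i<n. int (kf n d f i))"
      by (simp add: sum_subtractf)
    moreover have "(\<Sum>i<n. int (kf n d f i)) = SB" unfolding SB_def by (rule kfb) simp
    moreover have "(\<Sum>j=1..n+1. int (f j)) = SA + x" unfolding SA_def x_def a_def by simp
    ultimately show ?thesis by simp
  qed
  finally have sY: "int (\<Sum>y\<in>Yset n d. f y) = SA + x + int n * P1 - SB" .
  have P1c: "P1 = int (d choose 2)" using eP1 choose2_int[of d] by simp
  have "(\<Sum>y\<in>Yset n d. f y) mod d = (n * (d choose 2)) mod d"
    using assms(6) unfolding Psi_sharp_def by simp
  then have "int (\<Sum>y\<in>Yset n d. f y) mod int d = int (n * (d choose 2)) mod int d"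
    by (metis of_nat_mod)
  then have "(SA + x + int n * P1 - SB) mod int d = (int n * P1) mod int d"
    unfolding sY P1c by simp
  then have "int d dvd (SA + x + int n * P1 - SB) - int n * P1" using mod_eq_dvd_iff by blast
  moreover have "(SA + x + int n * P1 - SB) - int n * P1 = SA + x - SB" by simp
  ultimately have "int d dvd (SA + x - SB)" by simp
  then obtain t where t: "SA + x - SB = int d * t" by (auto elim: dvdE)
  define EL where "EL = int (n * d) * (1 - int d ^ 2) + (\<Sum>y \<in> Yset n d. - 6 * (int (f y) ^ 2 + int d * int (f y)))"
  have "(\<Sum>y \<in> Yset n d. - 6 * (int (f y) ^ 2 + int d * int (f y)))
      = (\<Sum>j=1..n+1. - 6 * (int (f j) ^ 2 + int d * int (f j))) + (\<Sum>i<n. (\<Sum>y<d. - 6 * (int y ^ 2 + int d * int y)) - (- 6 * (int (kf n d f i) ^ 2 + int d * int (kf n d f i))))"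
    by (rule sum_Y[OF fP assms(2), where g="\<lambda>y. - 6 * (int y ^ 2 + int d * int y)"])
  also have "\<dots> = (-6*(SA2 + x^2) - 6*int d*(SA+x)) + (int n*(-6*P2 - 6*int d*P1) + 6*SB2 + 6*int d*SB)"
  proof -
    have A: "(\<Sum>j=1..n+1. - 6 * (int (f j) ^ 2 + int d * int (f j))) = -6*(SA2 + x^2) - 6*int d*(SA+x)"
      unfolding sum_lin SA2_def SA_def x_def a_def by (simp add: algebra_simps)
    have G: "(\<Sum>y<d. - 6 * (int y ^ 2 + int d * int y)) = -6*P2 - 6*int d*P1"
      unfolding P1_def P2_def sum_lin by simp
    have B1: "(\<Sum>i<n. (int (kf n d f i) ^ 2 + int d * int (kf n d f i))) = (\<Sum>i=1..n. (b i ^ 2 + int d * b i))"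
      by (rule kfb) simp
    have B: "(\<Sum>i<n. (-6*P2 - 6*int d*P1) - (- 6 * (int (kf n d f i) ^ 2 + int d * int (kf n d f i))))
        = int n*(-6*P2 - 6*int d*P1) + 6*(\<Sum>i<n. (int (kf n d f i) ^ 2 + int d * int (kf n d f i)))"
      by (rule sum_lin2)
    have B2: "(\<Sum>i=1..n. (b i ^ 2 + int d * b i)) = SB2 + int d * SB"
      unfolding SB2_def SB_def by (simp add: sum.distrib sum_distrib_left)
    show ?thesis unfolding A G B B1 B2 by (simp add: algebra_simps)
  qed
  finally have ELe: "EL = int n*int d*(1-int d^2) + ((-6*(SA2 + x^2) - 6*int d*(SA+x)) + (int n*(-6*P2 - 6*int d*P1) + 6*SB2 + 6*int d*SB))"
    unfolding EL_def by simp
  have "EL - 12*R = 6*int d*(int d*(t^2-t) - int n*int d*(int d-1) - 2*t*x)"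
    unfolding ELe by (rule key[OF R2 eP2 eP1 t])
  moreover obtain u where u: "t^2 - t = 2*u"
  proof -
    have "even (t * (t - 1))" by simp
    then obtain u where "t*(t-1) = 2*u" by (erule evenE)
    then show ?thesis using that by (simp add: algebra_simps power2_eq_square)
  qed
  moreover obtain v where v: "int d*(int d-1) = 2*v"
  proof -
    have "even (int d * (int d - 1))" by simp
    then show ?thesis using that by (metis evenE)
  qed
  ultimately have "EL - 12*R = 6*int d*(int d*(2*u) - int n*(2*v) - 2*t*x)"
    by (simp add: mult.assoc)
  then have ELR: "EL = 12*R + int (12*d) * (int d*u - int n*v - t*x)" by (simp add: algebra_simps)
  have "\<zeta>s powi (int (n * d) * (1 - int d ^ 2)) *
           (\<Prod>y \<in> Yset n d. \<zeta>s powi (- 6 * (int (f y) ^ 2 + int d * int (f y)))) = \<zeta>s powi EL"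
    unfolding EL_def by (simp add: powi_sum[OF zs0] power_int_add[OF disjI1[OF zs0]] Yset_def)
  also have "\<dots> = \<zeta>s powi (12*R) * (\<zeta>s ^ (12*d)) powi (int d*u - int n*v - t*x)"
    unfolding ELR by (simp add: power_int_add[OF disjI1[OF zs0]] power_int_power)
  also have "\<dots> = (\<zeta>s ^ 12) powi R" using zs1 by (simp add: power_int_power)
  finally show ?thesis unfolding assms(5) R_def a_def b_def .
qed
end
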